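(* Let $f_i:\mathbb{R}^n\to(-\infty,+\infty]$ be proper, lower semicontinuous and prox-bounded with thresholds $\lambda_{f_i}>0$, $i=1,2$, and let $0<\lambda<\min\{\lambda_{f_1},\lambda_{f_2}\}$. Consider: (a) $\partial_p^\lambda f_1=\partial_p^\lambda f_2$; (b) $P_\lambda f_1=P_\lambda f_2$; (c) there is $c\in\mathbb{R}$ with $e_\lambda f_1=e_\lambda f_2+c$; (d) there is $c\in\mathbb{R}$ with $h_\lambda f_1=h_\lambda f_2+c$; (e) there is $c\in\mathbb{R}$ with $\overline{\operatorname{conv}}f_1=\overline{\operatorname{conv}}f_2+c$, provided $\operatorname{conv}f_i$ is proper for $i=1,2$. Then (a)$\Leftrightarrow$(b)$\Rightarrow$(c)$\Leftrightarrow$(d), and (a)$\Rightarrow$(e).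
   Context: $e_\lambda f(x):=\inf_y\{f(y)+\frac1{2\lambda}\|y-x\|^2\}$, $P_\lambda f(x):=\operatorname{argmin}_y\{f(y)+\frac1{2\lambda}\|y-x\|^2\}$; prox-bounded with threshold $\lambda_f=\sup\{\lambda>0:e_\lambda f(x)>-\infty\text{ for some }x\}$. $v\in\partial_p^\lambda f(x)$ iff $x\in\operatorname{dom}f$ and $f(y)\ge f(x)+\langle v,y-x\rangle-\frac1{2\lambda}\|y-x\|^2$ for all $y$. $h_\lambda f:=-e_\lambda(-e_\lambda f)$. $\operatorname{conv}f$ and $\overline{\operatorname{conv}}f$ are the convex hull and the lsc convex hull of $f$. *)

theory Defs
  imports "HOL-Analysis.Analysis" "HOL-Library.Extended_Real"
begin

definition proper_fn :: "('a \<Rightarrow> ereal) \<Rightarrow> bool" where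
  "proper_fn f \<longleftrightarrow> (\<forall>x. f x \<noteq> -\<infinity>) \<and> (\<exists>x. f x < \<infinity>)"

definition lsc_fn :: "('a::topological_space \<Rightarrow> ereal) \<Rightarrow> bool" where
  "lsc_fn f \<longleftrightarrow> (\<forall>x. f x \<le> Liminf (at x) f)"

definition dom_fn :: "('a \<Rightarrow> ereal) \<Rightarrow> 'a set" where
  "dom_fn f = {x. f x < \<infinity>}"

definition moreau_env :: "real \<Rightarrow> ('a::real_normed_vector \<Rightarrow> ereal) \<Rightarrow> 'a \<Rightarrow> ereal" where
  "moreau_env lam f x = (INF y. f y + ereal (1 / (2 * lam) * (norm (y - x))\<^sup>2))"

definition prox_map :: "real \<Rightarrow> ('a::real_normed_vector \<Rightarrow> ereal) \<Rightarrow> 'a \<Rightarrow> 'a set" where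
  "prox_map lam f x = {y. \<forall>z. f y + ereal (1 / (2 * lam) * (norm (y - x))\<^sup>2)
                              \<le> f z + ereal (1 / (2 * lam) * (norm (z - x))\<^sup>2)}"

definition prox_bounded :: "('a::real_normed_vector \<Rightarrow> ereal) \<Rightarrow> bool" where
  "prox_bounded f \<longleftrightarrow> (\<exists>lam>0. \<exists>x. moreau_env lam f x > -\<infinity>)"

definition prox_threshold :: "('a::real_normed_vector \<Rightarrow> ereal) \<Rightarrow> ereal" where
  "prox_threshold f = Sup {ereal lam | lam. lam > 0 \<and> (\<exists>x. moreau_env lam f x > -\<infinity>)}"

definition prox_subdiff :: "real \<Rightarrow> ('a::real_inner \<Rightarrow> ereal) \<Rightarrow> 'a \<Rightarrow> 'a set" where
  "prox_subdiff lam f x = {v. x \<in> dom_fn f \<and>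
     (\<forall>y. f y \<ge> f x + ereal (inner v (y - x) - 1 / (2 * lam) * (norm (y - x))\<^sup>2))}"

definition h_env :: "real \<Rightarrow> ('a::real_normed_vector \<Rightarrow> ereal) \<Rightarrow> 'a \<Rightarrow> ereal" where
  "h_env lam f = (\<lambda>x. - moreau_env lam (\<lambda>y. - moreau_env lam f y) x)"

definition convex_fn :: "('a::real_vector \<Rightarrow> ereal) \<Rightarrow> bool" where
  "convex_fn g \<longleftrightarrow> convex {(x, r::real). g x \<le> ereal r}"

definition conv_hull_fn :: "('a::real_vector \<Rightarrow> ereal) \<Rightarrow> 'a \<Rightarrow> ereal" where
  "conv_hull_fn f x = (SUP g \<in> {g. convex_fn g \<and> (\<forall>y. g y \<le> f y)}. g x)"

definition closed_conv_hull_fn :: "('a::real_normed_vector \<Rightarrow> ereal) \<Rightarrow> 'a \<Rightarrow> ereal" where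
  "closed_conv_hull_fn f x =
     (SUP g \<in> {g. convex_fn g \<and> lsc_fn g \<and> (\<forall>y. g y \<le> f y)}. g x)"

end

theory Submission
  imports Defs
begin


lemma INF_shift:
  fixes g :: "'b \<Rightarrow> ereal"
  shows "(INF y. g y + ereal d) = (INF y. g y) + ereal d"
proof (rule antisym)
  have "(INF y. g y + ereal d) + ereal (-d) \<le> g y" for y
  proof -
    have "(INF y. g y + ereal d) \<le> g y + ereal d" by (rule INF_lower) simp
    then have "(INF y. g y + ereal d) + ereal (-d) \<le> g y + ereal d + ereal (-d)"
      by (rule add_right_mono)
    also have "\<dots> = g y" by (cases "g y") auto
    finally show ?thesis .
  qed
  then have "(INF y. g y + ereal d) + ereal (-d) \<le> (INF y. g y)" by (rule INF_greatest)
  then have "(INF y. g y + ereal d) + ereal (-d) + ereal d \<le> (INF y. g y) + ereal d"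
    by (rule add_right_mono)
  then show "(INF y. g y + ereal d) \<le> (INF y. g y) + ereal d"
    by (cases "(INF y. g y + ereal d)") auto
next
  show "(INF y. g y) + ereal d \<le> (INF y. g y + ereal d)"
    by (rule INF_greatest) (simp add: INF_lower add_right_mono)
qed

lemma lsc_nhds:
  assumes "lsc_fn f" "ereal r < f x"
  shows "eventually (\<lambda>w. ereal r < f w) (nhds x)"
proof -
  have "ereal r < Liminf (at x) f" using assms unfolding lsc_fn_def by (meson less_le_trans)
  then have "eventually (\<lambda>w. ereal r < f w) (at x)" by (rule less_LiminfD)
  then have "eventually (\<lambda>w. w \<noteq> x \<longrightarrow> ereal r < f w) (nhds x)"
    by (simp add: eventually_at_filter)
  then show ?thesis
  proof (rule eventually_mono)
    fix w assume "w \<noteq> x \<longrightarrow> ereal r < f w"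
    then show "ereal r < f w" using assms(2) by (cases "w = x") auto
  qed
qed

lemma sq_identity:
  fixes x y z :: "'a::real_inner"
  assumes "lam > 0"
  shows "1/(2*lam) * (norm (y - z))\<^sup>2 - 1/(2*lam) * (norm (x - z))\<^sup>2
       = 1/(2*lam) * (norm (y - x))\<^sup>2 - inner ((1/lam) *\<^sub>R (z - x)) (y - x)"
proof -
  have d: "inner (y - x) (x - z) = ((norm (y - z))\<^sup>2 - (norm (y - x))\<^sup>2 - (norm (x - z))\<^sup>2) / 2"
    using dot_norm[of "y - x" "x - z"] by simp
  have p0: "inner (z - x) (y - x) = - inner (y - x) (x - z)"
    by (metis inner_commute inner_minus_left minus_diff_eq)
  have p: "inner (z - x) (y - x) = - (((norm (y - z))\<^sup>2 - (norm (y - x))\<^sup>2 - (norm (x - z))\<^sup>2) / 2)"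
    using p0 d by linarith
  have "inner ((1/lam) *\<^sub>R (z - x)) (y - x) = (1/lam) * inner (z - x) (y - x)" by simp
  also have "\<dots> = (1/lam) * (- ((norm (y - z))\<^sup>2 - (norm (y - x))\<^sup>2 - (norm (x - z))\<^sup>2) / 2)"
    by (simp only: p)
  finally show ?thesis using assms by (simp add: field_simps)
qed

lemma prox_iff_subdiff:
  fixes f :: "'a::real_inner \<Rightarrow> ereal"
  assumes pf: "proper_fn f" and lam: "lam > 0"
  shows "x \<in> prox_map lam f z \<longleftrightarrow> (1/lam) *\<^sub>R (z - x) \<in> prox_subdiff lam f x"
proof (cases "f x")
  case PInf
  obtain y where y: "f y < \<infinity>" using pf unfolding proper_fn_def by auto
  have "\<not> (f x + ereal (1 / (2 * lam) * (norm (x - z))\<^sup>2) \<le> f y + ereal (1 / (2 * lam) * (norm (y - z))\<^sup>2))"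
    using PInf y by auto
  then have "x \<notin> prox_map lam f z" unfolding prox_map_def by auto
  moreover have "x \<notin> dom_fn f" using PInf unfolding dom_fn_def by auto
  ultimately show ?thesis unfolding prox_subdiff_def by auto
next
  case MInf
  then show ?thesis using pf unfolding proper_fn_def by auto
next
  case (real a)
  have key: "(f x + ereal (1 / (2 * lam) * (norm (x - z))\<^sup>2) \<le> f y + ereal (1 / (2 * lam) * (norm (y - z))\<^sup>2))
      \<longleftrightarrow> (f y \<ge> f x + ereal (inner ((1/lam) *\<^sub>R (z - x)) (y - x) - 1 / (2 * lam) * (norm (y - x))\<^sup>2))" for y
  proof (cases "f y")
    case (real b)
    have "1/(2*lam) * (norm (y - z))\<^sup>2 - 1/(2*lam) * (norm (x - z))\<^sup>2
       = 1/(2*lam) * (norm (y - x))\<^sup>2 - inner ((1/lam) *\<^sub>R (z - x)) (y - x)"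
      by (rule sq_identity[OF lam])
    then show ?thesis using real \<open>f x = ereal a\<close> by auto
  next
    case PInf then show ?thesis using \<open>f x = ereal a\<close> by auto
  next
    case MInf then show ?thesis using pf unfolding proper_fn_def by auto
  qed
  have "x \<in> dom_fn f" using real unfolding dom_fn_def by auto
  then show ?thesis unfolding prox_map_def prox_subdiff_def using key by auto
qed

lemma subdiff_eq_iff_prox_eq:
  fixes f1 f2 :: "'a::real_inner \<Rightarrow> ereal"
  assumes "proper_fn f1" "proper_fn f2" "lam > 0"
  shows "prox_subdiff lam f1 = prox_subdiff lam f2 \<longleftrightarrow> prox_map lam f1 = prox_map lam f2"
proof
  assume H: "prox_subdiff lam f1 = prox_subdiff lam f2"
  show "prox_map lam f1 = prox_map lam f2"
  proof (intro ext set_eqI)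
    fix z x
    show "x \<in> prox_map lam f1 z \<longleftrightarrow> x \<in> prox_map lam f2 z"
      using prox_iff_subdiff[OF assms(1,3)] prox_iff_subdiff[OF assms(2,3)] H by simp
  qed
next
  assume H: "prox_map lam f1 = prox_map lam f2"
  show "prox_subdiff lam f1 = prox_subdiff lam f2"
  proof (intro ext set_eqI)
    fix x v :: 'a
    have e0: "(x + lam *\<^sub>R v) - x = lam *\<^sub>R v" by (rule add_diff_cancel_left')
    have e: "(1/lam) *\<^sub>R ((x + lam *\<^sub>R v) - x) = v" unfolding e0 using assms(3) by simp
    show "v \<in> prox_subdiff lam f1 x \<longleftrightarrow> v \<in> prox_subdiff lam f2 x"
      using prox_iff_subdiff[OF assms(1,3), of x "x + lam *\<^sub>R v"]
        prox_iff_subdiff[OF assms(2,3), of x "x + lam *\<^sub>R v"] H e by simp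
  qed
qed

lemma young_sq:
  fixes s t e :: real
  assumes "e > 0"
  shows "(s + t)\<^sup>2 \<le> (1 + e) * s\<^sup>2 + (1 + 1/e) * t\<^sup>2"
proof -
  have "0 \<le> (e * s - t)\<^sup>2" by simp
  then have "2 * e * s * t \<le> e\<^sup>2 * s\<^sup>2 + t\<^sup>2" by (simp add: power2_eq_square algebra_simps)
  then have "2 * s * t \<le> e * s\<^sup>2 + t\<^sup>2/e" using assms
    by (simp add: field_simps power2_eq_square)
  then show ?thesis using assms by (simp add: power2_eq_square algebra_simps)
qed

lemma threshold_bound:
  fixes f :: "'a::real_normed_vector \<Rightarrow> ereal"
  assumes "ereal lam < prox_threshold f"
  obtains lam' x0 c0 where "lam < lam'" "lam' > 0"
    "\<And>y. ereal c0 \<le> f y + ereal (1/(2*lam') * (norm (y - x0))\<^sup>2)"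
proof -
  from assms obtain s where s: "s \<in> {ereal lam' | lam'. lam' > 0 \<and> (\<exists>x. moreau_env lam' f x > -\<infinity>)}"
     "ereal lam < s" unfolding prox_threshold_def by (auto simp: less_Sup_iff)
  then obtain lam' x0 where l: "s = ereal lam'" "lam' > 0" "moreau_env lam' f x0 > -\<infinity>" by auto
  then have "lam < lam'" using s by auto
  have "\<exists>c0. ereal c0 \<le> moreau_env lam' f x0"
  proof (cases "moreau_env lam' f x0")
    case (real r) then show ?thesis by auto
  next
    case PInf then show ?thesis by auto
  next
    case MInf then show ?thesis using l by auto
  qed
  then obtain c0 where c0: "ereal c0 \<le> moreau_env lam' f x0" by blast
  have "ereal c0 \<le> f y + ereal (1/(2*lam') * (norm (y - x0))\<^sup>2)" for y
    using c0 unfolding moreau_env_def by (meson UNIV_I INF_lower order_trans)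
  then show thesis using that \<open>lam < lam'\<close> l by blast
qed

lemma prox_exists:
  fixes f :: "'a::euclidean_space \<Rightarrow> ereal"
  assumes pf: "proper_fn f" and lsc: "lsc_fn f" and lam: "lam > 0"
    and th: "ereal lam < prox_threshold f"
  shows "\<exists>y. y \<in> prox_map lam f z"
proof -
  obtain lam' x0 c0 where l': "lam < lam'" "lam' > 0"
    and c0: "\<And>y. ereal c0 \<le> f y + ereal (1/(2*lam') * (norm (y - x0))\<^sup>2)"
    using threshold_bound[OF th] by blast
  define \<beta> where "\<beta> = 1/(2*lam')"
  define \<gamma> where "\<gamma> = 1/(2*lam)"
  have b0: "0 < \<beta>" using l' by (simp add: \<beta>_def)
  have bg: "\<beta> < \<gamma>" using l' lam by (simp add: \<beta>_def \<gamma>_def frac_less2)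
  define \<epsilon> where "\<epsilon> = (\<gamma> - \<beta>)/(2*\<beta>)"
  define \<alpha> where "\<alpha> = (\<gamma> - \<beta>)/2"
  define K where "K = \<beta>*(1 + 1/\<epsilon>)*(norm (z - x0))\<^sup>2"
  have e0: "\<epsilon> > 0" using b0 bg by (simp add: \<epsilon>_def)
  have a0: "\<alpha> > 0" using bg by (simp add: \<alpha>_def)
  have bnd: "\<beta> * (norm (y - x0))\<^sup>2 \<le> (\<gamma> - \<alpha>) * (norm (y - z))\<^sup>2 + K" for y
  proof -
    have "norm (y - x0) \<le> norm (y - z) + norm (z - x0)"
      using norm_triangle_ineq[of "y - z" "z - x0"] by simp
    then have "(norm (y - x0))\<^sup>2 \<le> (norm (y - z) + norm (z - x0))\<^sup>2"
      by (simp add: power_mono)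
    also have "\<dots> \<le> (1 + \<epsilon>) * (norm (y - z))\<^sup>2 + (1 + 1/\<epsilon>) * (norm (z - x0))\<^sup>2"
      by (rule young_sq[OF e0])
    finally have "\<beta> * (norm (y - x0))\<^sup>2 \<le> \<beta> * ((1 + \<epsilon>) * (norm (y - z))\<^sup>2 + (1 + 1/\<epsilon>) * (norm (z - x0))\<^sup>2)"
      using b0 by (simp add: mult_left_mono)
    moreover have "\<beta> * (1 + \<epsilon>) = \<gamma> - \<alpha>" using b0 by (simp add: \<epsilon>_def \<alpha>_def field_simps)
    moreover have "\<beta> * ((1 + \<epsilon>) * (norm (y - z))\<^sup>2 + (1 + 1/\<epsilon>) * (norm (z - x0))\<^sup>2)
       = (\<beta> * (1 + \<epsilon>)) * (norm (y - z))\<^sup>2 + K" by (simp add: K_def algebra_simps)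
    ultimately show ?thesis by simp
  qed
  define \<phi> where "\<phi> y = f y + ereal (\<gamma> * (norm (y - z))\<^sup>2)" for y
  have \<phi>low: "ereal (c0 - K + \<alpha> * (norm (y - z))\<^sup>2) \<le> \<phi> y" for y
  proof (cases "f y")
    case (real a)
    from c0[of y] real have "c0 \<le> a + \<beta> * (norm (y - x0))\<^sup>2" by (simp add: \<beta>_def)
    with bnd[of y] show ?thesis by (simp add: \<phi>_def real algebra_simps)
  next
    case PInf then show ?thesis by (simp add: \<phi>_def)
  next
    case MInf then show ?thesis using pf unfolding proper_fn_def by auto
  qed
  obtain y1 where y1: "f y1 < \<infinity>" using pf unfolding proper_fn_def by auto
  define m where "m = (INF y. \<phi> y)"
  have m_low: "ereal (c0 - K) \<le> m" unfolding m_def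
  proof (rule INF_greatest)
    fix y
    have "ereal (c0 - K) \<le> ereal (c0 - K + \<alpha> * (norm (y - z))\<^sup>2)" using a0 by simp
    then show "ereal (c0 - K) \<le> \<phi> y" using \<phi>low[of y] by (rule order_trans)
  qed
  have "m \<le> \<phi> y1" unfolding m_def by (rule INF_lower) simp
  moreover have "\<phi> y1 < \<infinity>" using y1 by (simp add: \<phi>_def)
  ultimately have m_up: "m < \<infinity>" by (rule le_less_trans)
  obtain mr where mr: "m = ereal mr" using m_low m_up by (cases m) auto
  have "\<exists>y. \<phi> y < ereal (mr + 1/(Suc n))" for n
  proof -
    have "m < ereal (mr + 1/(Suc n))" using mr by simp
    then show ?thesis unfolding m_def by (simp add: INF_less_iff)
  qed
  then obtain Y where Y: "\<And>n. \<phi> (Y n) < ereal (mr + 1/(Suc n))" by metis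
  define R where "R = (mr + 1 - c0 + K)/\<alpha>"
  have Ybd: "(norm (Y n - z))\<^sup>2 \<le> R" for n
  proof -
    have "ereal (c0 - K + \<alpha> * (norm (Y n - z))\<^sup>2) < ereal (mr + 1/(Suc n))"
      using \<phi>low[of "Y n"] Y[of n] by (rule le_less_trans)
    then have "c0 - K + \<alpha> * (norm (Y n - z))\<^sup>2 < mr + 1/(Suc n)" by simp
    moreover have "1/(Suc n) \<le> (1::real)" by simp
    ultimately have "\<alpha> * (norm (Y n - z))\<^sup>2 \<le> mr + 1 - c0 + K" by linarith
    then show ?thesis using a0 by (simp add: R_def pos_le_divide_eq mult.commute)
  qed
  have "bounded (range Y)"
    unfolding bounded_iff
  proof (intro exI ballI)
    fix x assume "x \<in> range Y"
    then obtain n where x: "x = Y n" by auto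
    have "norm (Y n - z) \<le> max 1 R"
    proof (cases "norm (Y n - z) \<le> 1")
      case False
      then have "norm (Y n - z) * 1 \<le> norm (Y n - z) * norm (Y n - z)"
        by (intro mult_left_mono) auto
      then have "norm (Y n - z) \<le> (norm (Y n - z))\<^sup>2" by (simp add: power2_eq_square)
      then show ?thesis using Ybd[of n] by simp
    qed simp
    then show "norm x \<le> norm z + max 1 R" using x norm_triangle_ineq[of "Y n - z" z] by simp
  qed
  then obtain l r where r: "strict_mono r" "(Y \<circ> r) \<longlonglongrightarrow> l"
    using bounded_imp_convergent_subsequence by blast
  have Yr: "(\<lambda>n. Y (r n)) \<longlonglongrightarrow> l" using r(2) by (simp add: o_def)
  have "\<phi> l \<le> m"
  proof (rule ccontr)
    assume "\<not> \<phi> l \<le> m"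
    then have ml: "ereal mr < \<phi> l" using mr by simp
    have "\<exists>\<rho>. mr < \<rho> \<and> ereal \<rho> < \<phi> l"
    proof (cases "\<phi> l")
      case (real p)
      then show ?thesis using ml by (intro exI[of _ "(mr + p)/2"]) simp
    next
      case PInf
      then show ?thesis by (intro exI[of _ "mr + 1"]) simp
    next
      case MInf then show ?thesis using ml by simp
    qed
    then obtain \<rho> where rho: "mr < \<rho>" "ereal \<rho> < \<phi> l" by blast
    have "\<exists>s. \<rho> - \<gamma> * (norm (l - z))\<^sup>2 < s \<and> ereal s < f l"
    proof (cases "f l")
      case (real a)
      then show ?thesis using rho(2)
        by (intro exI[of _ "(\<rho> - \<gamma> * (norm (l - z))\<^sup>2 + a)/2"]) (simp add: \<phi>_def)
    next
      case PInf
      then show ?thesis by (intro exI[of _ "\<rho> - \<gamma> * (norm (l - z))\<^sup>2 + 1"]) simp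
    next
      case MInf then show ?thesis using pf unfolding proper_fn_def by auto
    qed
    then obtain s where s: "\<rho> - \<gamma> * (norm (l - z))\<^sup>2 < s" "ereal s < f l" by blast
    have ev1: "eventually (\<lambda>n. ereal s < f (Y (r n))) sequentially"
      using eventually_compose_filterlim[OF lsc_nhds[OF lsc s(2)] Yr] .
    have "(\<lambda>n. \<gamma> * (norm (Y (r n) - z))\<^sup>2) \<longlonglongrightarrow> \<gamma> * (norm (l - z))\<^sup>2"
      using Yr by (intro tendsto_intros)
    then have ev2: "eventually (\<lambda>n. \<rho> - s < \<gamma> * (norm (Y (r n) - z))\<^sup>2) sequentially"
      by (rule order_tendstoD(1)) (use s(1) in linarith)
    obtain N where N: "inverse (real (Suc N)) < \<rho> - mr"
      using reals_Archimedean[of "\<rho> - mr"] rho(1) by auto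
    have ev3: "eventually (\<lambda>n. mr + 1/(Suc (r n)) < \<rho>) sequentially"
      unfolding eventually_sequentially
    proof (intro exI allI impI)
      fix n assume "N \<le> n"
      then have "N \<le> r n" using seq_suble[OF r(1), of n] by simp
      then have "1/real (Suc (r n)) \<le> 1/real (Suc N)" by (simp add: frac_le)
      then show "mr + 1/(Suc (r n)) < \<rho>" using N by (simp add: inverse_eq_divide)
    qed
    have "eventually (\<lambda>n. False) sequentially"
      using ev1 ev2 ev3
    proof eventually_elim
      case (elim n)
      have "ereal \<rho> < \<phi> (Y (r n))"
      proof (cases "f (Y (r n))")
        case (real a)
        then show ?thesis using elim(1,2) by (simp add: \<phi>_def)
      next
        case PInf then show ?thesis by (simp add: \<phi>_def)
      next
        case MInf then show ?thesis using elim(1) by simp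
      qed
      moreover have "\<phi> (Y (r n)) < ereal \<rho>"
        using Y[of "r n"] elim(3) by (meson ereal_less_eq(3) less_imp_le order_less_le_trans)
      ultimately show False by simp
    qed
    then show False by simp
  qed
  then have "l \<in> prox_map lam f z"
    unfolding prox_map_def
  proof (intro CollectI allI)
    fix y
    assume "\<phi> l \<le> m"
    moreover have "m \<le> \<phi> y" unfolding m_def by (rule INF_lower) simp
    ultimately show "f l + ereal (1 / (2 * lam) * (norm (l - z))\<^sup>2) \<le> f y + ereal (1 / (2 * lam) * (norm (y - z))\<^sup>2)"
      by (simp add: \<phi>_def \<gamma>_def)
  qed
  then show ?thesis by blast
qed



lemma prox_val:
  fixes f :: "'a::real_normed_vector \<Rightarrow> ereal"
  assumes pf: "proper_fn f" and y: "y \<in> prox_map lam f z"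
  shows "moreau_env lam f z = f y + ereal (1/(2*lam) * (norm (y - z))\<^sup>2)"
    and "\<bar>f y\<bar> \<noteq> \<infinity>"
proof -
  have le: "\<And>w. f y + ereal (1/(2*lam) * (norm (y - z))\<^sup>2) \<le> f w + ereal (1/(2*lam) * (norm (w - z))\<^sup>2)"
    using y unfolding prox_map_def by auto
  show "moreau_env lam f z = f y + ereal (1/(2*lam) * (norm (y - z))\<^sup>2)"
    unfolding moreau_env_def
  proof (rule antisym)
    show "(INF w. f w + ereal (1 / (2 * lam) * (norm (w - z))\<^sup>2)) \<le> f y + ereal (1 / (2 * lam) * (norm (y - z))\<^sup>2)"
      by (rule INF_lower) simp
    show "f y + ereal (1 / (2 * lam) * (norm (y - z))\<^sup>2) \<le> (INF w. f w + ereal (1 / (2 * lam) * (norm (w - z))\<^sup>2))"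
      by (rule INF_greatest) (rule le)
  qed
  obtain y1 where y1: "f y1 < \<infinity>" using pf unfolding proper_fn_def by auto
  have "f y \<noteq> \<infinity>"
  proof
    assume "f y = \<infinity>"
    then show False using le[of y1] y1 by simp
  qed
  moreover have "f y \<noteq> -\<infinity>" using pf unfolding proper_fn_def by auto
  ultimately show "\<bar>f y\<bar> \<noteq> \<infinity>" by auto
qed

lemma sqdiff:
  fixes u x x' :: "'a::real_inner"
  shows "(norm (u - x'))\<^sup>2 - (norm (u - x))\<^sup>2 = (norm x')\<^sup>2 - (norm x)\<^sup>2 - 2 * inner u (x' - x)"
  by (simp add: power2_norm_eq_inner inner_diff_left inner_diff_right inner_commute algebra_simps)

lemma R_sym:
  fixes Y :: "'a::real_inner \<Rightarrow> 'a"
  assumes "lam > 0"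
  shows "(1/(2*lam)*(norm (Y x - x'))\<^sup>2 - 1/(2*lam)*(norm (Y x - x))\<^sup>2)
       + (1/(2*lam)*(norm (Y x' - x))\<^sup>2 - 1/(2*lam)*(norm (Y x' - x'))\<^sup>2)
       = (1/lam) * inner (Y x' - Y x) (x' - x)"
proof -
  have "(1/(2*lam)*(norm (Y x - x'))\<^sup>2 - 1/(2*lam)*(norm (Y x - x))\<^sup>2)
       + (1/(2*lam)*(norm (Y x' - x))\<^sup>2 - 1/(2*lam)*(norm (Y x' - x'))\<^sup>2)
      = 1/(2*lam) * (((norm (Y x - x'))\<^sup>2 - (norm (Y x - x))\<^sup>2) + ((norm (Y x' - x))\<^sup>2 - (norm (Y x' - x'))\<^sup>2))"
    by (simp add: algebra_simps)
  also have "\<dots> = 1/(2*lam) * (2 * inner (Y x' - Y x) (x' - x))"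
    unfolding sqdiff[of "Y x"] sqdiff[of "Y x'"]
    by (simp add: inner_diff_left inner_diff_right algebra_simps)
  finally show ?thesis by simp
qed

lemma tele_bound:
  fixes E1 E2 :: "'a::real_inner \<Rightarrow> real" and Y :: "'a \<Rightarrow> 'a"
  assumes lam: "lam > 0"
    and H1: "\<And>x x'. E1 x' \<le> E1 x + (1/(2*lam)*(norm (Y x - x'))\<^sup>2 - 1/(2*lam)*(norm (Y x - x))\<^sup>2)"
    and H2: "\<And>x x'. E2 x' \<le> E2 x + (1/(2*lam)*(norm (Y x - x'))\<^sup>2 - 1/(2*lam)*(norm (Y x - x))\<^sup>2)"
    and N: "N > 0"
  shows "(E1 b - E1 a) - (E2 b - E2 a) \<le> inner (Y b - Y a) (b - a) / (lam * real N)"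
proof -
  define p where "p k = a + (real k / real N) *\<^sub>R (b - a)" for k
  define g where "g k = inner (Y (p k)) (b - a)" for k
  have p0: "p 0 = a" by (simp add: p_def)
  have pN: "p N = b" using N by (simp add: p_def)
  have dp: "p (Suc k) - p k = (1/real N) *\<^sub>R (b - a)" for k
  proof -
    have "p (Suc k) - p k = (real (Suc k) / real N - real k / real N) *\<^sub>R (b - a)"
      by (simp add: p_def scaleR_left_diff_distrib)
    also have "real (Suc k) / real N - real k / real N = 1 / real N"
      by (simp add: diff_divide_distrib[symmetric])
    finally show ?thesis .
  qed
  define R where "R x x' = 1/(2*lam)*(norm (Y x - x'))\<^sup>2 - 1/(2*lam)*(norm (Y x - x))\<^sup>2" for x x'
  have tE1: "E1 b - E1 a = (\<Sum>k<N. E1 (p (Suc k)) - E1 (p k))"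
    using sum_lessThan_telescope[of "\<lambda>k. E1 (p k)" N] p0 pN by simp
  have tE2: "E2 b - E2 a = (\<Sum>k<N. E2 (p (Suc k)) - E2 (p k))"
    using sum_lessThan_telescope[of "\<lambda>k. E2 (p k)" N] p0 pN by simp
  have tm: "(E1 (p (Suc k)) - E1 (p k)) - (E2 (p (Suc k)) - E2 (p k)) \<le> (g (Suc k) - g k) / (lam * real N)" for k
  proof -
    have a1: "E1 (p (Suc k)) - E1 (p k) \<le> R (p k) (p (Suc k))"
      using H1[of "p (Suc k)" "p k"] by (simp add: R_def)
    have a2: "E2 (p k) - E2 (p (Suc k)) \<le> R (p (Suc k)) (p k)"
      using H2[of "p k" "p (Suc k)"] by (simp add: R_def)
    have "R (p k) (p (Suc k)) + R (p (Suc k)) (p k) = (1/lam) * inner (Y (p (Suc k)) - Y (p k)) (p (Suc k) - p k)"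
      unfolding R_def by (rule R_sym[OF lam])
    also have "\<dots> = (g (Suc k) - g k) / (lam * real N)"
      unfolding dp g_def by (simp add: inner_diff_left)
    finally show ?thesis using a1 a2 by linarith
  qed
  have "(E1 b - E1 a) - (E2 b - E2 a) = (\<Sum>k<N. (E1 (p (Suc k)) - E1 (p k)) - (E2 (p (Suc k)) - E2 (p k)))"
    unfolding tE1 tE2 by (simp add: sum_subtractf)
  also have "\<dots> \<le> (\<Sum>k<N. (g (Suc k) - g k) / (lam * real N))"
    by (rule sum_mono) (rule tm)
  also have "\<dots> = (g N - g 0) / (lam * real N)"
    by (simp add: sum_divide_distrib[symmetric] sum_lessThan_telescope)
  also have "\<dots> = inner (Y b - Y a) (b - a) / (lam * real N)"
    by (simp add: g_def p0 pN inner_diff_left)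
  finally show ?thesis .
qed

lemma small_le0:
  fixes d C :: real
  assumes "\<And>N::nat. N > 0 \<Longrightarrow> d \<le> C / real N"
  shows "d \<le> 0"
proof (rule ccontr)
  assume "\<not> d \<le> 0"
  then have d: "d > 0" by simp
  obtain N :: nat where N: "C / d < real N" using reals_Archimedean2 by blast
  have "d \<le> C / real (Suc N)" using assms[of "Suc N"] by simp
  moreover have "C / real (Suc N) < d"
  proof -
    have "C < d * real N" using N d by (simp add: pos_divide_less_eq mult.commute)
    moreover have "d * real N \<le> d * real (Suc N)" using d by simp
    ultimately have "C < d * real (Suc N)" by linarith
    then show ?thesis by (simp add: pos_divide_less_eq mult.commute)
  qed
  ultimately show False by simp
qed

lemma tele_eq:
  fixes E1 E2 :: "'a::real_inner \<Rightarrow> real" and Y :: "'a \<Rightarrow> 'a"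
  assumes lam: "lam > 0"
    and H1: "\<And>x x'. E1 x' \<le> E1 x + (1/(2*lam)*(norm (Y x - x'))\<^sup>2 - 1/(2*lam)*(norm (Y x - x))\<^sup>2)"
    and H2: "\<And>x x'. E2 x' \<le> E2 x + (1/(2*lam)*(norm (Y x - x'))\<^sup>2 - 1/(2*lam)*(norm (Y x - x))\<^sup>2)"
  shows "E1 b - E1 a = E2 b - E2 a"
proof -
  let ?C = "inner (Y b - Y a) (b - a) / lam"
  have "(E1 b - E1 a) - (E2 b - E2 a) \<le> 0"
    by (rule small_le0[of _ ?C]) (use tele_bound[OF lam H1 H2] in simp)
  moreover have "(E2 b - E2 a) - (E1 b - E1 a) \<le> 0"
    by (rule small_le0[of _ ?C]) (use tele_bound[OF lam H2 H1] in simp)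
  ultimately show ?thesis by simp
qed

lemma env_finite:
  fixes f :: "'a::euclidean_space \<Rightarrow> ereal"
  assumes "proper_fn f" "lsc_fn f" "lam > 0" "ereal lam < prox_threshold f"
  shows "\<bar>moreau_env lam f x\<bar> \<noteq> \<infinity>"
proof -
  obtain y where y: "y \<in> prox_map lam f x" using prox_exists[OF assms] by blast
  show ?thesis using prox_val[OF assms(1) y] by auto
qed

lemma env_sel:
  fixes f :: "'a::euclidean_space \<Rightarrow> ereal"
  assumes pf: "proper_fn f" and Y: "\<And>x. Y x \<in> prox_map lam f x"
  shows "real_of_ereal (moreau_env lam f x') \<le> real_of_ereal (moreau_env lam f x)
     + (1/(2*lam)*(norm (Y x - x'))\<^sup>2 - 1/(2*lam)*(norm (Y x - x))\<^sup>2)"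
proof -
  have v: "moreau_env lam f x = f (Y x) + ereal (1/(2*lam) * (norm (Y x - x))\<^sup>2)"
    and fin: "\<bar>f (Y x)\<bar> \<noteq> \<infinity>" using prox_val[OF pf Y[of x]] by auto
  have v': "moreau_env lam f x' = f (Y x') + ereal (1/(2*lam) * (norm (Y x' - x'))\<^sup>2)"
    and fin': "\<bar>f (Y x')\<bar> \<noteq> \<infinity>" using prox_val[OF pf Y[of x']] by auto
  have le: "moreau_env lam f x' \<le> f (Y x) + ereal (1/(2*lam) * (norm (Y x - x'))\<^sup>2)"
    unfolding moreau_env_def by (rule INF_lower) simp
  obtain a where a: "f (Y x) = ereal a" using fin by (cases "f (Y x)") auto
  obtain a' where a': "f (Y x') = ereal a'" using fin' by (cases "f (Y x')") auto
  show ?thesis using le v v' a a' by simp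
qed

lemma prox_eq_imp_env:
  fixes f1 f2 :: "'a::euclidean_space \<Rightarrow> ereal"
  assumes a1: "proper_fn f1" "lsc_fn f1" "lam > 0" "ereal lam < prox_threshold f1"
    and a2: "proper_fn f2" "lsc_fn f2" "ereal lam < prox_threshold f2"
    and eq: "prox_map lam f1 = prox_map lam f2"
  shows "\<exists>c::real. \<forall>x. moreau_env lam f1 x = moreau_env lam f2 x + ereal c"
proof -
  define Y where "Y x = (SOME y. y \<in> prox_map lam f1 x)" for x
  have Y1: "Y x \<in> prox_map lam f1 x" for x
    unfolding Y_def using prox_exists[OF a1] by (rule someI_ex)
  have Y2: "Y x \<in> prox_map lam f2 x" for x using Y1 eq by simp
  define E1 where "E1 x = real_of_ereal (moreau_env lam f1 x)" for x
  define E2 where "E2 x = real_of_ereal (moreau_env lam f2 x)" for x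
  have e1: "moreau_env lam f1 x = ereal (E1 x)" for x
    using env_finite[OF a1, of x] unfolding E1_def by (cases "moreau_env lam f1 x") auto
  have e2: "moreau_env lam f2 x = ereal (E2 x)" for x
    using env_finite[OF a2(1,2) a1(3) a2(3), of x] unfolding E2_def by (cases "moreau_env lam f2 x") auto
  have "E1 b - E1 0 = E2 b - E2 0" for b
    by (rule tele_eq[OF a1(3)]) (unfold E1_def E2_def, (rule env_sel[OF a1(1) Y1] env_sel[OF a2(1) Y2])+)
  then have "moreau_env lam f1 x = moreau_env lam f2 x + ereal (E1 0 - E2 0)" for x
    by (simp add: e1 e2 algebra_simps)
  then show ?thesis by blast
qed

lemma env_shift:
  fixes g :: "'a::real_normed_vector \<Rightarrow> ereal"
  shows "moreau_env lam (\<lambda>y. g y + ereal c) x = moreau_env lam g x + ereal c"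
proof -
  have "(\<lambda>y. g y + ereal c + ereal (1 / (2 * lam) * (norm (y - x))\<^sup>2))
      = (\<lambda>y. (g y + ereal (1 / (2 * lam) * (norm (y - x))\<^sup>2)) + ereal c)"
    by (simp add: add_ac)
  then show ?thesis unfolding moreau_env_def by (simp only:) (rule INF_shift)
qed

lemma h_shift:
  fixes f1 f2 :: "'a::real_normed_vector \<Rightarrow> ereal"
  assumes "\<And>x. moreau_env lam f1 x = moreau_env lam f2 x + ereal c"
  shows "h_env lam f1 x = h_env lam f2 x + ereal c"
proof -
  have "(\<lambda>y. - moreau_env lam f1 y) = (\<lambda>y. - moreau_env lam f2 y + ereal (-c))"
  proof
    fix y show "- moreau_env lam f1 y = - moreau_env lam f2 y + ereal (-c)"
      using assms[of y] by (cases "moreau_env lam f2 y") auto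
  qed
  then have "moreau_env lam (\<lambda>y. - moreau_env lam f1 y) x
      = moreau_env lam (\<lambda>y. - moreau_env lam f2 y) x + ereal (-c)"
    by (simp add: env_shift)
  then show ?thesis unfolding h_env_def
    by (cases "moreau_env lam (\<lambda>y. - moreau_env lam f2 y) x") auto
qed

lemma h_le:
  fixes f :: "'a::real_normed_vector \<Rightarrow> ereal"
  assumes fin: "\<And>x. \<bar>moreau_env lam f x\<bar> \<noteq> \<infinity>"
  shows "h_env lam f x \<le> f x"
proof -
  have "- f x \<le> (INF w. - moreau_env lam f w + ereal (1 / (2 * lam) * (norm (w - x))\<^sup>2))"
  proof (rule INF_greatest)
    fix w
    have le: "moreau_env lam f w \<le> f x + ereal (1 / (2 * lam) * (norm (x - w))\<^sup>2)"
      unfolding moreau_env_def by (rule INF_lower) simp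
    obtain ew where ew: "moreau_env lam f w = ereal ew" using fin[of w] by (cases "moreau_env lam f w") auto
    show "- f x \<le> - moreau_env lam f w + ereal (1 / (2 * lam) * (norm (w - x))\<^sup>2)"
    proof (cases "f x")
      case (real a)
      then show ?thesis using le ew by (simp add: norm_minus_commute)
    next
      case PInf then show ?thesis by simp
    next
      case MInf then show ?thesis using le ew by simp
    qed
  qed
  then show ?thesis unfolding h_env_def moreau_env_def[of lam "\<lambda>y. - moreau_env lam f y"]
    by (simp add: ereal_uminus_le_reorder)
qed

lemma env_h:
  fixes f :: "'a::real_normed_vector \<Rightarrow> ereal"
  assumes fin: "\<And>x. \<bar>moreau_env lam f x\<bar> \<noteq> \<infinity>"
  shows "moreau_env lam (h_env lam f) z = moreau_env lam f z"
proof (rule antisym)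
  show "moreau_env lam (h_env lam f) z \<le> moreau_env lam f z"
    unfolding moreau_env_def by (rule INF_mono') (simp add: add_right_mono h_le[OF fin])
next
  obtain ez where ez: "moreau_env lam f z = ereal ez" using fin[of z] by (cases "moreau_env lam f z") auto
  show "moreau_env lam f z \<le> moreau_env lam (h_env lam f) z"
    unfolding moreau_env_def[of lam "h_env lam f"]
  proof (rule INF_greatest)
    fix x
    have "(INF w. - moreau_env lam f w + ereal (1 / (2 * lam) * (norm (w - x))\<^sup>2))
        \<le> - moreau_env lam f z + ereal (1 / (2 * lam) * (norm (z - x))\<^sup>2)"
      by (rule INF_lower) simp
    then have "(INF w. - moreau_env lam f w + ereal (1 / (2 * lam) * (norm (w - x))\<^sup>2))
        \<le> ereal (1 / (2 * lam) * (norm (z - x))\<^sup>2 - ez)" using ez by simp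
    then have "- ereal (1 / (2 * lam) * (norm (z - x))\<^sup>2 - ez) \<le>
       - (INF w. - moreau_env lam f w + ereal (1 / (2 * lam) * (norm (w - x))\<^sup>2))"
      by (simp only: ereal_minus_le_minus)
    then have hx: "ereal (ez - 1 / (2 * lam) * (norm (z - x))\<^sup>2) \<le> h_env lam f x"
      unfolding h_env_def moreau_env_def[of lam "\<lambda>y. - moreau_env lam f y"] by simp
    show "moreau_env lam f z \<le> h_env lam f x + ereal (1 / (2 * lam) * (norm (x - z))\<^sup>2)"
    proof (cases "h_env lam f x")
      case (real a)
      then show ?thesis using hx ez by (simp add: norm_minus_commute)
    next
      case PInf then show ?thesis using ez by simp
    next
      case MInf then show ?thesis using hx by simp
    qed
  qed
qed

lemma env_iff_h:
  fixes f1 f2 :: "'a::real_normed_vector \<Rightarrow> ereal"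
  assumes fin1: "\<And>x. \<bar>moreau_env lam f1 x\<bar> \<noteq> \<infinity>" and fin2: "\<And>x. \<bar>moreau_env lam f2 x\<bar> \<noteq> \<infinity>"
  shows "(\<exists>c::real. \<forall>x. moreau_env lam f1 x = moreau_env lam f2 x + ereal c) \<longleftrightarrow>
         (\<exists>c::real. \<forall>x. h_env lam f1 x = h_env lam f2 x + ereal c)"
proof
  assume "\<exists>c::real. \<forall>x. moreau_env lam f1 x = moreau_env lam f2 x + ereal c"
  then obtain c where "\<And>x. moreau_env lam f1 x = moreau_env lam f2 x + ereal c" by blast
  then show "\<exists>c::real. \<forall>x. h_env lam f1 x = h_env lam f2 x + ereal c"
    using h_shift by blast
next
  assume "\<exists>c::real. \<forall>x. h_env lam f1 x = h_env lam f2 x + ereal c"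
  then obtain c where c: "\<And>x. h_env lam f1 x = h_env lam f2 x + ereal c" by blast
  have "moreau_env lam f1 x = moreau_env lam f2 x + ereal c" for x
  proof -
    have "moreau_env lam f1 x = moreau_env lam (h_env lam f1) x" using env_h[OF fin1] by simp
    also have "h_env lam f1 = (\<lambda>y. h_env lam f2 y + ereal c)" using c by auto
    also have "moreau_env lam (\<lambda>y. h_env lam f2 y + ereal c) x = moreau_env lam (h_env lam f2) x + ereal c"
      by (rule env_shift)
    also have "moreau_env lam (h_env lam f2) x = moreau_env lam f2 x" using env_h[OF fin2] by simp
    finally show ?thesis .
  qed
  then show "\<exists>c::real. \<forall>x. moreau_env lam f1 x = moreau_env lam f2 x + ereal c" by blast
qed

lemma affine_convex_lsc:
  fixes v :: "'a::euclidean_space"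
  shows "convex_fn (\<lambda>z. ereal (inner v z + \<beta>))" "lsc_fn (\<lambda>z. ereal (inner v z + \<beta>))"
proof -
  have "{(x, r::real). ereal (inner v x + \<beta>) \<le> ereal r} = {p. inner (v, -1::real) p \<le> -\<beta>}"
    by auto
  then show "convex_fn (\<lambda>z. ereal (inner v z + \<beta>))"
    unfolding convex_fn_def using convex_halfspace_le by metis
  show "lsc_fn (\<lambda>z. ereal (inner v z + \<beta>))"
    unfolding lsc_fn_def
  proof
    fix x
    have "((\<lambda>z. ereal (inner v z + \<beta>)) \<longlongrightarrow> ereal (inner v x + \<beta>)) (at x)"
      by (intro tendsto_intros)
    then show "ereal (inner v x + \<beta>) \<le> Liminf (at x) (\<lambda>z. ereal (inner v z + \<beta>))"
      unfolding le_Liminf_iff using order_tendstoD(1) by blast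
  qed
qed

lemma lsc_closed_epi:
  fixes G :: "'a::euclidean_space \<Rightarrow> ereal"
  assumes lsc: "lsc_fn G"
  shows "closed {(x, r::real). G x \<le> ereal r}"
  unfolding closed_sequential_limits
proof (intro allI impI, elim conjE)
  fix p :: "nat \<Rightarrow> 'a \<times> real" and l
  assume inS: "\<forall>n. p n \<in> {(x, r). G x \<le> ereal r}" and lim: "p \<longlonglongrightarrow> l"
  obtain z r where l: "l = (z, r)" by (cases l)
  have lz: "(\<lambda>n. fst (p n)) \<longlonglongrightarrow> z" using tendsto_fst[OF lim] l by simp
  have lr: "(\<lambda>n. snd (p n)) \<longlonglongrightarrow> r" using tendsto_snd[OF lim] l by simp
  show "l \<in> {(x, r). G x \<le> ereal r}"
  proof (rule ccontr)
    assume "l \<notin> {(x, r). G x \<le> ereal r}"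
    then have "ereal r < G z" using l by auto
    then obtain r' where r': "ereal r < ereal r'" "ereal r' < G z" using ereal_dense2 by blast
    have ev1: "eventually (\<lambda>n. ereal r' < G (fst (p n))) sequentially"
      using eventually_compose_filterlim[OF lsc_nhds[OF lsc r'(2)] lz] .
    have ev2: "eventually (\<lambda>n. snd (p n) < r') sequentially"
      using order_tendstoD(2)[OF lr] r'(1) by simp
    have "eventually (\<lambda>n. False) sequentially"
      using ev1 ev2
    proof eventually_elim
      case (elim n)
      have "G (fst (p n)) \<le> ereal (snd (p n))" using inS[rule_format, of n]
        by (cases "p n") auto
      then show False using elim by (meson ereal_less_eq(3) less_imp_le not_le order_le_less_trans)
    qed
    then show False by simp
  qed
qed

lemma norm_add_sq:
  fixes a b :: "'a::real_inner"
  shows "(norm (a + b))\<^sup>2 = (norm a)\<^sup>2 + 2 * inner a b + (norm b)\<^sup>2"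
  using dot_norm[of a b] by simp

lemma quad_lower:
  fixes v x z :: "'a::real_inner"
  assumes "lam > 0"
  shows "inner v x - lam / 2 * (norm v)\<^sup>2 \<le> inner v z + 1/(2*lam) * (norm (z - x))\<^sup>2"
proof -
  have "0 \<le> (norm ((z - x) + lam *\<^sub>R v))\<^sup>2" by simp
  also have "\<dots> = (norm (z - x))\<^sup>2 + 2 * lam * inner (z - x) v + lam\<^sup>2 * (norm v)\<^sup>2"
    unfolding norm_add_sq[of "z - x" "lam *\<^sub>R v"] by (simp add: power_mult_distrib)
  finally have "0 \<le> (norm (z - x))\<^sup>2 + 2 * lam * inner (z - x) v + lam\<^sup>2 * (norm v)\<^sup>2" .
  then have "0 \<le> ((norm (z - x))\<^sup>2 + 2 * lam * inner (z - x) v + lam\<^sup>2 * (norm v)\<^sup>2) / (2 * lam)"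
    using assms by simp
  also have "\<dots> = 1/(2*lam) * (norm (z - x))\<^sup>2 + inner (z - x) v + lam / 2 * (norm v)\<^sup>2"
    using assms by (simp add: field_simps power2_eq_square)
  finally have "0 \<le> 1/(2*lam) * (norm (z - x))\<^sup>2 + inner (z - x) v + lam / 2 * (norm v)\<^sup>2" .
  moreover have "inner (z - x) v = inner v z - inner v x" by (simp add: inner_diff_right inner_commute[of _ v])
  ultimately show ?thesis by linarith
qed

lemma affine_transfer:
  fixes f1 f2 :: "'a::real_inner \<Rightarrow> ereal"
  assumes lam: "lam > 0" and e: "\<And>x. moreau_env lam f1 x = moreau_env lam f2 x + ereal c"
    and l: "\<And>y. ereal (inner v y + \<beta>) \<le> f1 y"
  shows "ereal (inner v y + (\<beta> - c)) \<le> f2 y"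
proof -
  define x where "x = y + lam *\<^sub>R v"
  have "ereal (inner v x + \<beta> - lam / 2 * (norm v)\<^sup>2) \<le> moreau_env lam f1 x"
    unfolding moreau_env_def
  proof (rule INF_greatest)
    fix z
    have "inner v x + \<beta> - lam / 2 * (norm v)\<^sup>2 \<le> inner v z + \<beta> + 1/(2*lam) * (norm (z - x))\<^sup>2"
      using quad_lower[OF lam, of v x z] by simp
    then have "ereal (inner v x + \<beta> - lam / 2 * (norm v)\<^sup>2) \<le> ereal (inner v z + \<beta>) + ereal (1/(2*lam) * (norm (z - x))\<^sup>2)"
      by simp
    also have "\<dots> \<le> f1 z + ereal (1/(2*lam) * (norm (z - x))\<^sup>2)"
      by (rule add_right_mono) (rule l)
    finally show "ereal (inner v x + \<beta> - lam / 2 * (norm v)\<^sup>2) \<le> f1 z + ereal (1/(2*lam) * (norm (z - x))\<^sup>2)" .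
  qed
  then have A: "ereal (inner v x + \<beta> - lam / 2 * (norm v)\<^sup>2) \<le> moreau_env lam f2 x + ereal c"
    using e by simp
  have B: "moreau_env lam f2 x \<le> f2 y + ereal (1/(2*lam) * (norm (y - x))\<^sup>2)"
    unfolding moreau_env_def by (rule INF_lower) simp
  have nx: "1/(2*lam) * (norm (y - x))\<^sup>2 = lam / 2 * (norm v)\<^sup>2"
    using lam by (simp add: x_def power2_eq_square)
  have ix: "inner v x = inner v y + lam * (norm v)\<^sup>2"
    by (simp add: x_def inner_add_right power2_norm_eq_inner)
  show ?thesis
  proof (cases "f2 y")
    case (real a)
    show ?thesis
    proof (cases "moreau_env lam f2 x")
      case (real b)
      then show ?thesis using A B nx ix \<open>f2 y = ereal a\<close> by simp
    next
      case PInf then show ?thesis using B \<open>f2 y = ereal a\<close> by simp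
    next
      case MInf then show ?thesis using A by simp
    qed
  next
    case PInf then show ?thesis by simp
  next
    case MInf
    then show ?thesis using B A by (cases "moreau_env lam f2 x") auto
  qed
qed

lemma affine_minorant_sep:
  fixes G f :: "'a::euclidean_space \<Rightarrow> ereal"
  assumes cG: "convex_fn G" and lG: "lsc_fn G" and Gf: "\<And>y. G y \<le> f y"
    and y1: "f y1 < \<infinity>"
    and l0: "\<And>y. ereal (inner v0 y + b0) \<le> f y"
    and t: "ereal t < G y0"
  shows "\<exists>v \<beta>. (\<forall>y. ereal (inner v y + \<beta>) \<le> f y) \<and> t < inner v y0 + \<beta>"
proof -
  define S where "S = {(x, r::real). G x \<le> ereal r}"
  have c1: "convex S" using cG unfolding convex_fn_def S_def .
  have c2: "closed S" unfolding S_def by (rule lsc_closed_epi[OF lG])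
  have c3: "(y0, t) \<notin> S" using t unfolding S_def by auto
  obtain a b where ab0: "inner a (y0, t) < b" "\<forall>p\<in>S. inner a p > b"
    using separating_hyperplane_closed_point[OF c1 c2 c3] by blast
  have ab: "inner a (y0, t) < b" "\<And>p. p \<in> S \<Longrightarrow> inner a p > b" using ab0 by auto
  obtain av \<alpha> where a: "a = (av, \<alpha>)" by (cases a)
  have H0: "inner av y0 + \<alpha> * t < b" using ab(1) a by simp
  have H: "\<And>x r. G x \<le> ereal r \<Longrightarrow> inner av x + \<alpha> * r > b"
    using ab(2) a unfolding S_def by auto
  have Gy1: "G y1 < \<infinity>" using Gf[of y1] y1 by (rule le_less_trans)
  obtain r1 where r1: "G y1 \<le> ereal r1"
    using Gy1 by (cases "G y1") auto
  have \<alpha>0: "\<alpha> \<ge> 0"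
  proof (rule ccontr)
    assume "\<not> \<alpha> \<ge> 0"
    then have an: "\<alpha> < 0" by simp
    define r where "r = max r1 ((inner av y1 - b) / (-\<alpha>))"
    have "r1 \<le> r" unfolding r_def by simp
    then have "G y1 \<le> ereal r" using r1 by (simp add: order_trans)
    then have "inner av y1 + \<alpha> * r > b" by (rule H)
    moreover have "(inner av y1 - b) / (-\<alpha>) \<le> r" unfolding r_def by simp
    then have "inner av y1 - b \<le> r * (-\<alpha>)" using an by (subst (asm) pos_divide_le_eq) auto
    then have "\<alpha> * r \<le> b - inner av y1" by (simp add: algebra_simps)
    ultimately show False by simp
  qed
  have fnm: "f y \<noteq> -\<infinity>" for y using l0[of y] by auto
  show ?thesis
  proof (cases "\<alpha> > 0")
    case True
    define v where "v = (-1/\<alpha>) *\<^sub>R av"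
    define \<beta> where "\<beta> = b / \<alpha>"
    have iv: "inner v y + \<beta> = (b - inner av y) / \<alpha>" for y
      unfolding v_def \<beta>_def by (simp add: diff_divide_distrib)
    have "ereal (inner v y + \<beta>) \<le> f y" for y
    proof (cases "f y")
      case (real r)
      then have "G y \<le> ereal r" using Gf[of y] by simp
      then have "inner av y + \<alpha> * r > b" by (rule H)
      then have "(b - inner av y) / \<alpha> \<le> r" using True by (simp add: pos_divide_le_eq mult.commute)
      then show ?thesis using real iv by simp
    next
      case PInf then show ?thesis by simp
    next
      case MInf then show ?thesis using fnm by simp
    qed
    moreover have "t < inner v y0 + \<beta>"
      using H0 True unfolding iv by (simp add: pos_less_divide_eq mult.commute)
    ultimately show ?thesis by blast
  next
    case False
    then have a0: "\<alpha> = 0" using \<alpha>0 by simp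
    define \<delta> where "\<delta> = b - inner av y0"
    have d0: "\<delta> > 0" using H0 a0 by (simp add: \<delta>_def)
    define \<mu> where "\<mu> = (\<bar>t - (inner v0 y0 + b0)\<bar> + 1) / \<delta>"
    have mu0: "\<mu> \<ge> 0" using d0 by (simp add: \<mu>_def)
    have mud: "\<mu> * \<delta> = \<bar>t - (inner v0 y0 + b0)\<bar> + 1" using d0 by (simp add: \<mu>_def)
    define v where "v = v0 - \<mu> *\<^sub>R av"
    define \<beta> where "\<beta> = b0 + \<mu> * b"
    have iv: "inner v y + \<beta> = (inner v0 y + b0) + \<mu> * (b - inner av y)" for y
      unfolding v_def \<beta>_def by (simp add: inner_diff_left algebra_simps)
    have "ereal (inner v y + \<beta>) \<le> f y" for y
    proof (cases "f y")
      case (real r)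
      then have "G y \<le> ereal r" using Gf[of y] by simp
      then have "inner av y > b" using H[of y r] a0 by simp
      then have "\<mu> * (b - inner av y) \<le> 0" using mu0 by (simp add: mult_nonneg_nonpos)
      then have "inner v y + \<beta> \<le> inner v0 y + b0" using iv by simp
      then show ?thesis using l0[of y] real by simp
    next
      case PInf then show ?thesis by simp
    next
      case MInf then show ?thesis using fnm by simp
    qed
    moreover have "t < inner v y0 + \<beta>"
    proof -
      have "t - (inner v0 y0 + b0) < \<mu> * \<delta>" using mud by linarith
      then show ?thesis using iv[of y0] unfolding \<delta>_def by simp
    qed
    ultimately show ?thesis by blast
  qed
qed

lemma proper_convex_affine_minorant:
  fixes K :: "'a::euclidean_space \<Rightarrow> ereal"
  assumes cK: "convex_fn K" and pK: "proper_fn K"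
  shows "\<exists>v \<beta>. \<forall>y. ereal (inner v y + \<beta>) \<le> K y"
proof -
  define S where "S = {(x, r::real). K x \<le> ereal r}"
  have cS: "convex S" using cK unfolding convex_fn_def S_def .
  obtain y1 where y1: "K y1 < \<infinity>" using pK unfolding proper_fn_def by auto
  have Knm: "K y \<noteq> -\<infinity>" for y using pK unfolding proper_fn_def by auto
  obtain r1 where "K y1 = ereal r1" using y1 Knm[of y1] by (cases "K y1") auto
  then have "(y1, r1) \<in> S" unfolding S_def by simp
  then have "rel_interior S \<noteq> {}" using rel_interior_eq_empty[OF cS] by auto
  then obtain z1 s1 where zs: "(z1, s1) \<in> rel_interior S" by auto
  then have "(z1, s1) \<in> S" using rel_interior_subset by blast
  then have Kz1: "K z1 \<le> ereal s1" unfolding S_def by simp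
  obtain k1 where k1: "K z1 = ereal k1" using Kz1 Knm[of z1] by (cases "K z1") auto
  have pS: "(z1, k1) \<in> S" using k1 unfolding S_def by simp
  have qS: "(z1, k1 + 1) \<in> S" using k1 unfolding S_def by simp
  have notri: "(z1, k1) \<notin> rel_interior S"
  proof
    assume "(z1, k1) \<in> rel_interior S"
    then obtain e where e: "e > 0" "ball (z1, k1) e \<inter> affine hull S \<subseteq> S"
      unfolding mem_rel_interior_ball by blast
    define p' where "p' = (1 + e/2) *\<^sub>R (z1, k1) + (- e/2) *\<^sub>R (z1, k1 + 1)"
    have p': "p' = (z1, k1 - e/2)" unfolding p'_def by (simp add: algebra_simps)
    have "p' \<in> affine hull S" unfolding p'_def
      by (rule mem_affine[OF affine_affine_hull]) (use pS qS hull_subset[of S affine] in auto)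
    moreover have "p' \<in> ball (z1, k1) e" using e(1) unfolding p'
      by (simp add: dist_Pair_Pair dist_real_def)
    ultimately have "p' \<in> S" using e(2) by blast
    then have "K z1 \<le> ereal (k1 - e/2)" unfolding p' S_def by simp
    then show False using k1 e(1) by simp
  qed
  obtain a where a: "a \<noteq> 0" "\<And>y. y \<in> S \<Longrightarrow> a \<bullet> (z1, k1) \<le> a \<bullet> y"
    "\<And>y. y \<in> rel_interior S \<Longrightarrow> a \<bullet> (z1, k1) < a \<bullet> y"
    using supporting_hyperplane_rel_boundary[OF cS pS notri] by blast
  obtain av \<alpha> where av: "a = (av, \<alpha>)" by (cases a)
  have "a \<bullet> (z1, k1) < a \<bullet> (z1, s1)" by (rule a(3)[OF zs])
  then have "\<alpha> * k1 < \<alpha> * s1" using av by simp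
  moreover have "k1 \<le> s1" using Kz1 k1 by simp
  ultimately have \<alpha>0: "\<alpha> > 0"
  proof -
    assume A: "\<alpha> * k1 < \<alpha> * s1" "k1 \<le> s1"
    show "\<alpha> > 0"
    proof (rule ccontr)
      assume "\<not> \<alpha> > 0"
      then have "\<alpha> * s1 \<le> \<alpha> * k1" using A(2) by (simp add: mult_left_mono_neg)
      then show False using A(1) by simp
    qed
  qed
  define v where "v = (-1/\<alpha>) *\<^sub>R av"
  define \<beta> where "\<beta> = k1 + inner av z1 / \<alpha>"
  have "ereal (inner v y + \<beta>) \<le> K y" for y
  proof (cases "K y")
    case (real r)
    then have "(y, r) \<in> S" unfolding S_def by simp
    then have "a \<bullet> (z1, k1) \<le> a \<bullet> (y, r)" by (rule a(2))
    then have "inner av z1 + \<alpha> * k1 \<le> inner av y + \<alpha> * r" using av by simp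
    then have "k1 + (inner av z1 - inner av y) / \<alpha> \<le> r" using \<alpha>0
      by (simp add: field_simps)
    then show ?thesis using real unfolding v_def \<beta>_def by (simp add: diff_divide_distrib)
  next
    case PInf then show ?thesis by simp
  next
    case MInf then show ?thesis using Knm by simp
  qed
  then show ?thesis by blast
qed

lemma conv_hull_props:
  fixes f :: "'a::real_vector \<Rightarrow> ereal"
  shows "convex_fn (conv_hull_fn f)" "conv_hull_fn f y \<le> f y"
proof -
  let ?A = "{g. convex_fn g \<and> (\<forall>y. g y \<le> f y)}"
  have "{(x, r::real). conv_hull_fn f x \<le> ereal r} = (\<Inter>g\<in>?A. {(x, r). g x \<le> ereal r})"
    unfolding conv_hull_fn_def by (auto simp: SUP_le_iff)
  moreover have "convex (\<Inter>g\<in>?A. {(x, r::real). g x \<le> ereal r})"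
    by (rule convex_INT) (simp add: convex_fn_def)
  ultimately show "convex_fn (conv_hull_fn f)" unfolding convex_fn_def by simp
  show "conv_hull_fn f y \<le> f y" unfolding conv_hull_fn_def by (rule SUP_least) auto
qed

lemma cc_le:
  fixes f1 f2 :: "'a::euclidean_space \<Rightarrow> ereal"
  assumes lam: "lam > 0" and e: "\<And>x. moreau_env lam f1 x = moreau_env lam f2 x + ereal c"
    and p1: "proper_fn f1" and pc1: "proper_fn (conv_hull_fn f1)"
  shows "closed_conv_hull_fn f1 y \<le> closed_conv_hull_fn f2 y + ereal c"
proof -
  obtain v0 b0 where l0': "\<And>z. ereal (inner v0 z + b0) \<le> conv_hull_fn f1 z"
    using proper_convex_affine_minorant[OF conv_hull_props(1) pc1] by blast
  have l0: "ereal (inner v0 z + b0) \<le> f1 z" for z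
    using l0'[of z] conv_hull_props(2)[of f1 z] by (rule order_trans)
  obtain y1 where y1: "f1 y1 < \<infinity>" using p1 unfolding proper_fn_def by auto
  show ?thesis
    unfolding closed_conv_hull_fn_def[of f1]
  proof (rule SUP_least)
    fix G assume G: "G \<in> {g. convex_fn g \<and> lsc_fn g \<and> (\<forall>y. g y \<le> f1 y)}"
    show "G y \<le> closed_conv_hull_fn f2 y + ereal c"
    proof (rule ccontr)
      assume "\<not> G y \<le> closed_conv_hull_fn f2 y + ereal c"
      then have "closed_conv_hull_fn f2 y + ereal c < G y" by simp
      then obtain t where t: "closed_conv_hull_fn f2 y + ereal c < ereal t" "ereal t < G y"
        using ereal_dense2 by blast
      obtain v \<beta> where vb: "\<And>z. ereal (inner v z + \<beta>) \<le> f1 z" "t < inner v y + \<beta>"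
        using affine_minorant_sep[of G f1 y1 v0 b0 t y] G y1 l0 t(2) by auto
      have "\<And>z. ereal (inner v z + (\<beta> - c)) \<le> f2 z"
        using affine_transfer[OF lam e vb(1)] by blast
      then have "(\<lambda>z. ereal (inner v z + (\<beta> - c))) \<in> {g. convex_fn g \<and> lsc_fn g \<and> (\<forall>y. g y \<le> f2 y)}"
        using affine_convex_lsc[of v "\<beta> - c"] by auto
      then have "ereal (inner v y + (\<beta> - c)) \<le> closed_conv_hull_fn f2 y"
        unfolding closed_conv_hull_fn_def by (rule SUP_upper2) simp
      then have "ereal (inner v y + (\<beta> - c)) + ereal c \<le> closed_conv_hull_fn f2 y + ereal c"
        by (rule add_right_mono)
      then have "ereal (inner v y + \<beta>) \<le> closed_conv_hull_fn f2 y + ereal c" by simp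
      also have "\<dots> < ereal t" by (rule t(1))
      finally have "inner v y + \<beta> < t" by simp
      then show False using vb(2) by simp
    qed
  qed
qed

theorem mainTheorem11:
  fixes f1 f2 :: "'a::euclidean_space \<Rightarrow> ereal" and lam :: real
  assumes "proper_fn f1" "lsc_fn f1" "prox_bounded f1" "prox_threshold f1 > 0"
      and "proper_fn f2" "lsc_fn f2" "prox_bounded f2" "prox_threshold f2 > 0"
      and "0 < lam" "ereal lam < min (prox_threshold f1) (prox_threshold f2)"
  shows "(prox_subdiff lam f1 = prox_subdiff lam f2 \<longleftrightarrow> prox_map lam f1 = prox_map lam f2)
    \<and> (prox_map lam f1 = prox_map lam f2 \<longrightarrow>
         (\<exists>c::real. \<forall>x. moreau_env lam f1 x = moreau_env lam f2 x + ereal c))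
    \<and> ((\<exists>c::real. \<forall>x. moreau_env lam f1 x = moreau_env lam f2 x + ereal c) \<longleftrightarrow>
         (\<exists>c::real. \<forall>x. h_env lam f1 x = h_env lam f2 x + ereal c))
    \<and> (proper_fn (conv_hull_fn f1) \<and> proper_fn (conv_hull_fn f2) \<longrightarrow>
         prox_subdiff lam f1 = prox_subdiff lam f2 \<longrightarrow>
         (\<exists>c::real. \<forall>x. closed_conv_hull_fn f1 x = closed_conv_hull_fn f2 x + ereal c))"
proof -
  have t1: "ereal lam < prox_threshold f1" and t2: "ereal lam < prox_threshold f2"
    using assms(10) by auto
  have fin1: "\<And>x. \<bar>moreau_env lam f1 x\<bar> \<noteq> \<infinity>"
    by (rule env_finite[OF assms(1,2,9) t1])
  have fin2: "\<And>x. \<bar>moreau_env lam f2 x\<bar> \<noteq> \<infinity>"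
    by (rule env_finite[OF assms(5,6,9) t2])
  have P1: "prox_subdiff lam f1 = prox_subdiff lam f2 \<longleftrightarrow> prox_map lam f1 = prox_map lam f2"
    by (rule subdiff_eq_iff_prox_eq[OF assms(1,5,9)])
  have P2: "prox_map lam f1 = prox_map lam f2 \<longrightarrow>
         (\<exists>c::real. \<forall>x. moreau_env lam f1 x = moreau_env lam f2 x + ereal c)"
    using prox_eq_imp_env[OF assms(1,2,9) t1 assms(5,6) t2] by blast
  have P3: "(\<exists>c::real. \<forall>x. moreau_env lam f1 x = moreau_env lam f2 x + ereal c) \<longleftrightarrow>
         (\<exists>c::real. \<forall>x. h_env lam f1 x = h_env lam f2 x + ereal c)"
    by (rule env_iff_h[OF fin1 fin2])
  have P4: "(\<exists>c::real. \<forall>x. closed_conv_hull_fn f1 x = closed_conv_hull_fn f2 x + ereal c)"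
    if pc: "proper_fn (conv_hull_fn f1)" "proper_fn (conv_hull_fn f2)"
      and sd: "prox_subdiff lam f1 = prox_subdiff lam f2"
  proof -
    obtain c where c: "\<And>x. moreau_env lam f1 x = moreau_env lam f2 x + ereal c"
      using P1 P2 sd by blast
    have c': "\<And>x. moreau_env lam f2 x = moreau_env lam f1 x + ereal (-c)"
    proof -
      fix x show "moreau_env lam f2 x = moreau_env lam f1 x + ereal (-c)"
        using c[of x] fin2[of x] by (cases "moreau_env lam f2 x") auto
    qed
    have "closed_conv_hull_fn f1 x = closed_conv_hull_fn f2 x + ereal c" for x
    proof -
      have A: "closed_conv_hull_fn f1 x \<le> closed_conv_hull_fn f2 x + ereal c"
        by (rule cc_le[OF assms(9) c assms(1) pc(1)])
      have B: "closed_conv_hull_fn f2 x \<le> closed_conv_hull_fn f1 x + ereal (-c)"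
        by (rule cc_le[OF assms(9) c' assms(5) pc(2)])
      show ?thesis using A B
        by (cases "closed_conv_hull_fn f1 x"; cases "closed_conv_hull_fn f2 x") auto
    qed
    then show ?thesis by blast
  qed
  show ?thesis using P1 P2 P3 P4 by blast
qed

end
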